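(* Let $G$ be of type $A_{n-1}$, let $1\le s,r\le n-1$ and $p=\lfloor rs/n\rfloor$. Then $$w_{s,r}=(s_s s_{s-1}\cdots s_{p+1})(s_{s+1}s_s\cdots s_{p+2})\cdots(s_{s+r-p-1}\cdots s_{r+1}s_r),$$ i.e. $w_{s,r}=\prod_{j=p+1}^{r}(s_{s+j-p-1}s_{s+j-p-2}\cdots s_j)$ with the factors ordered by increasing $j$.
   Context: $G$ is the simple adjoint group of type $A_{n-1}$ (i.e. $PSL(n,\mathbb{C})$) with maximal torus $T$, Borel $B\supseteq T$, simple roots $\alpha_1,\dots,\alpha_{n-1}$ in the standard numbering, simple reflections $s_i$, fundamental weights $\omega_i$ (all minuscule); $\lambda_s$ is the one-parameter subgroup of $T$ with $\langle\alpha_j,\lambda_s\rangle=\delta_{sj}$. $P=P_{S\setminus\{\alpha_r\}}$, $W^{S\setminus\{\alpha_r\}}$ the minimal coset representatives of $W/W_{S\setminus\{\alpha_r\}}$ with the Bruhat order. $w_{s,r}$ is the unique Bruhat-minimal element $w\in W^{S\setminus\{\alpha_r\}}$ with $\langle w(\omega_r),\lambda_s\rangle\le0$ (equivalently, such that the Schubert variety $X(w)=\overline{BwP/P}$ has a point at which some $\lambda_s(\mathbb{G}_m)$-invariant section of a positive power of $\mathcal{L}(m\omega_r)$ is nonzero, $m$ least with $m\omega_r$ in the root lattice). *)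

theory Defs
  imports Complex_Main "HOL-Combinatorics.Permutations"
begin

text \<open>Weyl group of type A_(n-1): permutations of {1..n} (as functions nat => nat
fixing everything outside {1..n}); the simple reflection s_i (1 <= i <= n-1)
is the transposition of i and i+1.  Products are function composition, so the
word [a,b,c] denotes s_a s_b s_c.\<close>

definition weyl :: "nat \<Rightarrow> (nat \<Rightarrow> nat) set" where
  "weyl n = {w. w permutes {1..n}}"

definition sref :: "nat \<Rightarrow> nat \<Rightarrow> nat" where
  "sref i = Transposition.transpose i (Suc i)"

definition word_prod :: "nat list \<Rightarrow> nat \<Rightarrow> nat" where
  "word_prod ws = foldr (\<lambda>i acc. sref i \<circ> acc) ws id"

definition coxeter_length :: "nat \<Rightarrow> (nat \<Rightarrow> nat) \<Rightarrow> nat" where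
  "coxeter_length n w =
     (LEAST k. \<exists>ws. length ws = k \<and> set ws \<subseteq> {1..<n} \<and> word_prod ws = w)"

definition bruhat_step :: "nat \<Rightarrow> (nat \<Rightarrow> nat) \<Rightarrow> (nat \<Rightarrow> nat) \<Rightarrow> bool" where
  "bruhat_step n u v \<longleftrightarrow> u \<in> weyl n \<and>
     (\<exists>i j. 1 \<le> i \<and> i < j \<and> j \<le> n \<and> v = u \<circ> Transposition.transpose i j
            \<and> coxeter_length n u < coxeter_length n v)"

definition bruhat_le :: "nat \<Rightarrow> (nat \<Rightarrow> nat) \<Rightarrow> (nat \<Rightarrow> nat) \<Rightarrow> bool" where
  "bruhat_le n = (bruhat_step n)\<^sup>*\<^sup>*"

definition min_coset_reps :: "nat \<Rightarrow> nat \<Rightarrow> (nat \<Rightarrow> nat) set" where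
  "min_coset_reps n r = {w \<in> weyl n.
     \<forall>i \<in> {1..<n} - {r}. coxeter_length n w < coxeter_length n (w \<circ> sref i)}"

text \<open>Weights in epsilon-coordinates: functions on {1..n} (modulo constants);
epsilon_i is the indicator of i, omega_r = eps_1 + ... + eps_r,
alpha_j = eps_j - eps_(j+1).  Weyl action: (w mu)(i) = mu (w^-1 i), so
w eps_i = eps_(w i).  The one-parameter subgroup lambda_s (coweight with
<alpha_j, lambda_s> = delta_sj) has coordinates [i <= s] - s/n (sum zero).\<close>

definition omega :: "nat \<Rightarrow> nat \<Rightarrow> real" where
  "omega r i = (if 1 \<le> i \<and> i \<le> r then 1 else 0)"

definition weyl_act :: "(nat \<Rightarrow> nat) \<Rightarrow> (nat \<Rightarrow> real) \<Rightarrow> nat \<Rightarrow> real" where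
  "weyl_act w \<mu> = \<mu> \<circ> inv w"

definition lam :: "nat \<Rightarrow> nat \<Rightarrow> nat \<Rightarrow> real" where
  "lam n s i = (if i \<le> s then 1 else 0) - real s / real n"

definition pairing :: "nat \<Rightarrow> (nat \<Rightarrow> real) \<Rightarrow> (nat \<Rightarrow> real) \<Rightarrow> real" where
  "pairing n \<mu> l = (\<Sum>i = 1..n. \<mu> i * l i)"

definition cond_set :: "nat \<Rightarrow> nat \<Rightarrow> nat \<Rightarrow> (nat \<Rightarrow> nat) set" where
  "cond_set n s r = {w \<in> min_coset_reps n r.
      pairing n (weyl_act w (omega r)) (lam n s) \<le> 0}"

definition w_sr :: "nat \<Rightarrow> nat \<Rightarrow> nat \<Rightarrow> nat \<Rightarrow> nat" where
  "w_sr n s r = (THE w. w \<in> cond_set n s r \<and>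
      (\<forall>v \<in> cond_set n s r. bruhat_le n v w \<longrightarrow> v = w))"

end

theory Submission
  imports Defs
begin

definition invs :: "nat \<Rightarrow> (nat \<Rightarrow> nat) \<Rightarrow> (nat \<times> nat) set" where
  "invs n w = {(i,j). 1 \<le> i \<and> i < j \<and> j \<le> n \<and> w j < w i}"

definition ninv :: "nat \<Rightarrow> (nat \<Rightarrow> nat) \<Rightarrow> nat" where
  "ninv n w = card (invs n w)"

lemma finite_invs: "finite (invs n w)"
  by (rule finite_subset[of _ "{1..n} \<times> {1..n}"]) (auto simp: invs_def)

lemma sref_apply: "sref a x = (if x = a then Suc a else if x = Suc a then a else x)"
  by (simp add: sref_def Transposition.transpose_def)

lemma sref_mono: "x < y \<Longrightarrow> \<not> (x = a \<and> y = Suc a) \<Longrightarrow> sref a x < sref a y"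
  by (auto simp: sref_apply)

lemma sref_sref: "sref a (sref a x) = x"
  by (auto simp: sref_apply)

lemma sref_comp_sref: "sref a \<circ> (sref a \<circ> w) = w"
  by (auto simp: sref_sref)

lemma sref_permutes: "1 \<le> a \<Longrightarrow> a < n \<Longrightarrow> sref a permutes {1..n}"
  unfolding sref_def by (rule permutes_swap_id) auto

lemma word_prod_Nil: "word_prod [] = id"
  by (simp add: word_prod_def)

lemma word_prod_Cons: "word_prod (a # ws) = sref a \<circ> word_prod ws"
  by (simp add: word_prod_def)

lemma word_prod_append: "word_prod (xs @ ys) = word_prod xs \<circ> word_prod ys"
  by (induct xs) (auto simp: word_prod_Nil word_prod_Cons)

lemma word_prod_permutes: "set ws \<subseteq> {1..<n} \<Longrightarrow> word_prod ws permutes {1..n}"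
proof (induct ws)
  case Nil
  then show ?case by (simp only: word_prod_Nil permutes_id)
next
  case (Cons a ws)
  then show ?case
    unfolding word_prod_Cons by (intro permutes_compose sref_permutes) auto
qed

lemma ninv_left_up:
  assumes w: "w permutes {1..n}" and a: "1 \<le> a" "a < n"
    and lt: "inv w a < inv w (Suc a)"
  shows "ninv n (sref a \<circ> w) = Suc (ninv n w)"
proof -
  define i where "i = inv w a"
  define j where "j = inv w (Suc a)"
  have wi: "w i = a" unfolding i_def by (rule permutes_inverses(1)[OF w])
  have wj: "w j = Suc a" unfolding j_def by (rule permutes_inverses(1)[OF w])
  have iS: "i \<in> {1..n}" unfolding i_def using a permutes_in_image[OF permutes_inv[OF w]] by auto
  have jS: "j \<in> {1..n}" unfolding j_def using a permutes_in_image[OF permutes_inv[OF w]] by auto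
  have ij: "i < j" using lt i_def j_def by simp
  have inj: "inj w" by (rule permutes_inj[OF w])
  have eqi: "w x = a \<Longrightarrow> x = i" for x using inj wi by (metis injD)
  have eqj: "w x = Suc a \<Longrightarrow> x = j" for x using inj wj by (metis injD)
  have eq: "invs n (sref a \<circ> w) = insert (i,j) (invs n w)"
  proof (rule set_eqI, clarify)
    fix x y
    show "((x,y) \<in> invs n (sref a \<circ> w)) = ((x,y) \<in> insert (i,j) (invs n w))"
    proof
      assume h: "(x,y) \<in> invs n (sref a \<circ> w)"
      hence h1: "1 \<le> x" "x < y" "y \<le> n" "sref a (w y) < sref a (w x)" by (auto simp: invs_def)
      show "(x,y) \<in> insert (i,j) (invs n w)"
      proof (cases "w y < w x")
        case True then show ?thesis using h1 by (auto simp: invs_def)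
      next
        case False
        have "w x \<noteq> w y" using h1 inj by (metis injD less_irrefl)
        with False have "w x < w y" by simp
        have "w x = a \<and> w y = Suc a"
        proof (rule ccontr)
          assume "\<not> (w x = a \<and> w y = Suc a)"
          from sref_mono[OF \<open>w x < w y\<close> this] h1(4) show False by simp
        qed
        then show ?thesis using eqi eqj by auto
      qed
    next
      assume "(x,y) \<in> insert (i,j) (invs n w)"
      then consider "x = i" "y = j" | "(x,y) \<in> invs n w" by auto
      then show "(x,y) \<in> invs n (sref a \<circ> w)"
      proof cases
        case 1 then show ?thesis using iS jS ij wi wj by (auto simp: invs_def sref_apply)
      next
        case 2
        hence h1: "1 \<le> x" "x < y" "y \<le> n" "w y < w x" by (auto simp: invs_def)
        have "\<not> (w y = a \<and> w x = Suc a)" using eqi eqj h1 ij by auto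
        from sref_mono[OF h1(4) this] h1 show ?thesis by (auto simp: invs_def)
      qed
    qed
  qed
  have notin: "(i,j) \<notin> invs n w" using wi wj by (auto simp: invs_def)
  show ?thesis unfolding ninv_def eq using notin finite_invs by simp
qed

lemma inv_sref_comp:
  assumes w: "w permutes {1..n}" and a: "1 \<le> a" "a < n"
  shows "inv (sref a \<circ> w) a = inv w (Suc a)" "inv (sref a \<circ> w) (Suc a) = inv w a"
proof -
  have p: "sref a \<circ> w permutes {1..n}" by (rule permutes_compose[OF w sref_permutes[OF a]])
  show "inv (sref a \<circ> w) a = inv w (Suc a)"
    unfolding permutes_inv_eq[OF p] by (simp add: permutes_inverses(1)[OF w] sref_apply)
  show "inv (sref a \<circ> w) (Suc a) = inv w a"
    unfolding permutes_inv_eq[OF p] by (simp add: permutes_inverses(1)[OF w] sref_apply)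
qed

lemma ninv_left_down:
  assumes w: "w permutes {1..n}" and a: "1 \<le> a" "a < n"
    and lt: "inv w (Suc a) < inv w a"
  shows "ninv n w = Suc (ninv n (sref a \<circ> w))"
proof -
  have p: "sref a \<circ> w permutes {1..n}" by (rule permutes_compose[OF w sref_permutes[OF a]])
  have "ninv n (sref a \<circ> (sref a \<circ> w)) = Suc (ninv n (sref a \<circ> w))"
    by (rule ninv_left_up[OF p a]) (simp add: inv_sref_comp[OF w a] lt)
  then show ?thesis by (simp add: sref_comp_sref)
qed

lemma ninv_inv_le:
  assumes w: "w permutes {1..n}"
  shows "ninv n (inv w) \<le> ninv n w"
proof -
  let ?u = "inv w"
  have u: "?u permutes {1..n}" by (rule permutes_inv[OF w])
  let ?f = "\<lambda>(i,j). (?u j, ?u i)"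
  have inju: "inj ?u" by (rule permutes_inj[OF u])
  have "inj_on ?f (invs n ?u)"
  proof (rule inj_onI)
    fix x y assume "x \<in> invs n ?u" "y \<in> invs n ?u" and e: "?f x = ?f y"
    obtain i j where x: "x = (i,j)" by (cases x)
    obtain i' j' where y: "y = (i',j')" by (cases y)
    from e have e1: "?u j = ?u j'" and e2: "?u i = ?u i'" unfolding x y by simp_all
    have "i = i'" by (rule injD[OF inju e2])
    moreover have "j = j'" by (rule injD[OF inju e1])
    ultimately
    show "x = y" using x y by simp
  qed
  moreover have "?f ` invs n ?u \<subseteq> invs n w"
  proof clarify
    fix i j assume "(i,j) \<in> invs n ?u"
    hence h: "1 \<le> i" "i < j" "j \<le> n" "?u j < ?u i" by (auto simp: invs_def)
    have "j \<in> {1..n}" "i \<in> {1..n}" using h by auto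
    hence b: "?u j \<in> {1..n}" "?u i \<in> {1..n}" using permutes_in_image[OF u] by blast+
    have wu: "w (?u j) = j" "w (?u i) = i" by (rule permutes_inverses(1)[OF w])+
    show "(?u j, ?u i) \<in> invs n w" unfolding invs_def using b h wu by simp
  qed
  ultimately show ?thesis unfolding ninv_def by (intro card_inj_on_le finite_invs)
qed

lemma ninv_inv:
  assumes w: "w permutes {1..n}"
  shows "ninv n (inv w) = ninv n w"
  using ninv_inv_le[OF w] ninv_inv_le[OF permutes_inv[OF w]] permutes_inv_inv[OF w] by simp

lemma ninv_right_up:
  assumes w: "w permutes {1..n}" and a: "1 \<le> a" "a < n"
    and lt: "w a < w (Suc a)"
  shows "ninv n (w \<circ> sref a) = Suc (ninv n w)"
proof -
  have u: "inv w permutes {1..n}" by (rule permutes_inv[OF w])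
  have p: "w \<circ> sref a permutes {1..n}" by (rule permutes_compose[OF sref_permutes[OF a] w])
  have "inv (w \<circ> sref a) = inv (sref a) \<circ> inv w"
    by (rule o_inv_distrib[OF permutes_bij[OF w] permutes_bij[OF sref_permutes[OF a]]])
  also have "inv (sref a) = sref a" by (simp add: sref_def)
  finally have "inv (w \<circ> sref a) = sref a \<circ> inv w" .
  hence "ninv n (w \<circ> sref a) = ninv n (sref a \<circ> inv w)" using ninv_inv[OF p] by simp
  also have "\<dots> = Suc (ninv n (inv w))"
    by (rule ninv_left_up[OF u a]) (simp add: permutes_inv_inv[OF w] lt)
  finally show ?thesis using ninv_inv[OF w] by simp
qed


lemma ninv_right_down:
  assumes w: "w permutes {1..n}" and a: "1 \<le> a" "a < n"
    and lt: "w (Suc a) < w a"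
  shows "ninv n w = Suc (ninv n (w \<circ> sref a))"
proof -
  have p: "w \<circ> sref a permutes {1..n}" by (rule permutes_compose[OF sref_permutes[OF a] w])
  have "ninv n ((w \<circ> sref a) \<circ> sref a) = Suc (ninv n (w \<circ> sref a))"
    by (rule ninv_right_up[OF p a]) (simp add: sref_apply lt)
  moreover have "(w \<circ> sref a) \<circ> sref a = w" by (auto simp: sref_sref)
  ultimately show ?thesis by simp
qed

lemma incr_lt:
  assumes inc: "\<forall>i. a \<le> i \<longrightarrow> Suc i < b \<longrightarrow> g i < (g (Suc i) :: nat)"
  shows "a \<le> i \<Longrightarrow> i < j \<Longrightarrow> j < b \<Longrightarrow> g i < g j"
proof (induct j)
  case 0 then show ?case by simp
next
  case (Suc j)
  show ?case
  proof (cases "i = j")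
    case True then show ?thesis using inc Suc.prems by auto
  next
    case False
    then have "g i < g j" using Suc by auto
    also have "g j < g (Suc j)" using inc Suc.prems False by auto
    finally show ?thesis .
  qed
qed

lemma mono_unique:
  fixes g h :: "nat \<Rightarrow> nat"
  assumes ig: "\<forall>i. a \<le> i \<longrightarrow> Suc i < b \<longrightarrow> g i < g (Suc i)"
    and ih: "\<forall>i. a \<le> i \<longrightarrow> Suc i < b \<longrightarrow> h i < h (Suc i)"
    and im: "g ` {a..<b} = h ` {a..<b}"
    and i: "i \<in> {a..<b}"
  shows "g i = h i"
proof -
  have sg: "sorted_wrt (<) (map g [a..<b])"
    unfolding sorted_wrt_iff_nth_less using incr_lt[OF ig] by auto
  have sh: "sorted_wrt (<) (map h [a..<b])"
    unfolding sorted_wrt_iff_nth_less using incr_lt[OF ih] by auto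
  have "map h [a..<b] = map g [a..<b]"
    by (rule strict_sorted_equal[OF sg sh]) (simp add: im)
  then have "\<forall>x\<in>{a..<b}. h x = g x" by simp
  then show ?thesis using i by simp
qed

lemma perm_incr_id:
  assumes w: "w permutes {1..n}"
    and inc: "\<forall>a. 1 \<le> a \<longrightarrow> a < n \<longrightarrow> inv w a < inv w (Suc a)"
  shows "w = id"
proof -
  let ?u = "inv w"
  have u: "?u permutes {1..n}" by (rule permutes_inv[OF w])
  have e: "{1..<Suc n} = {1..n}" by auto
  have "?u i = i" for i
  proof (cases "i \<in> {1..n}")
    case True
    have f1: "\<forall>i. 1 \<le> i \<longrightarrow> Suc i < Suc n \<longrightarrow> ?u i < ?u (Suc i)" using inc by auto
    have f2: "\<forall>i. 1 \<le> i \<longrightarrow> Suc i < Suc n \<longrightarrow> id i < id (Suc i)" by simp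
    have f3: "?u ` {1..<Suc n} = id ` {1..<Suc n}" unfolding e permutes_image[OF u] by simp
    have f4: "i \<in> {1..<Suc n}" using True by auto
    show ?thesis using mono_unique[OF f1 f2 f3 f4] by simp
  next
    case False then show ?thesis by (rule permutes_not_in[OF u])
  qed
  then have "?u = id" by auto
  then have "inv ?u = id" by simp
  then show ?thesis using permutes_inv_inv[OF w] by simp
qed

lemma ninv_id: "ninv n id = 0"
proof -
  have "invs n id = {}" by (auto simp: invs_def)
  then show ?thesis by (simp add: ninv_def)
qed

lemma ninv_id': "ninv n (\<lambda>x. x) = 0"
  using ninv_id[unfolded id_def] .

lemma inv_neq:
  assumes w: "w permutes {1..n}" shows "inv w a \<noteq> inv w (Suc a)"
proof
  assume "inv w a = inv w (Suc a)"
  then have "a = Suc a" by (rule injD[OF permutes_inj[OF permutes_inv[OF w]]])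
  then show False by simp
qed

lemma exists_word:
  "w permutes {1..n} \<Longrightarrow> \<exists>ws. length ws = ninv n w \<and> set ws \<subseteq> {1..<n} \<and> word_prod ws = w"
proof (induction "ninv n w" arbitrary: w rule: less_induct)
  case less
  show ?case
  proof (cases "\<exists>a. 1 \<le> a \<and> a < n \<and> inv w (Suc a) < inv w a")
    case True
    then obtain a where a: "1 \<le> a" "a < n" and lt: "inv w (Suc a) < inv w a" by blast
    let ?v = "sref a \<circ> w"
    have vp: "?v permutes {1..n}" by (rule permutes_compose[OF less.prems sref_permutes[OF a]])
    have d: "ninv n w = Suc (ninv n ?v)" by (rule ninv_left_down[OF less.prems a lt])
    then obtain ws where ws: "length ws = ninv n ?v" "set ws \<subseteq> {1..<n}" "word_prod ws = ?v"
      using less.hyps[of ?v] vp by auto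
    show ?thesis
    proof (intro exI conjI)
      show "length (a # ws) = ninv n w" using ws d by simp
      show "set (a # ws) \<subseteq> {1..<n}" using ws a by auto
      show "word_prod (a # ws) = w" using ws by (simp add: word_prod_Cons sref_comp_sref)
    qed
  next
    case False
    have "\<forall>a. 1 \<le> a \<longrightarrow> a < n \<longrightarrow> inv w a < inv w (Suc a)"
    proof (intro allI impI)
      fix a assume "1 \<le> a" "a < n"
      then have "\<not> inv w (Suc a) < inv w a" using False by blast
      moreover have "inv w a \<noteq> inv w (Suc a)" by (rule inv_neq[OF less.prems])
      ultimately show "inv w a < inv w (Suc a)" by simp
    qed
    then have "w = id" by (rule perm_incr_id[OF less.prems])
    then show ?thesis by (intro exI[of _ "[]"]) (simp add: ninv_id word_prod_Nil)
  qed
qed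

lemma word_prod_ninv: "set ws \<subseteq> {1..<n} \<Longrightarrow> ninv n (word_prod ws) \<le> length ws"
proof (induct ws)
  case Nil then show ?case by (simp add: word_prod_Nil ninv_id')
next
  case (Cons a ws)
  have a: "1 \<le> a" "a < n" using Cons.prems by auto
  have vp: "word_prod ws permutes {1..n}" using Cons.prems by (intro word_prod_permutes) auto
  have ih: "ninv n (word_prod ws) \<le> length ws" using Cons by auto
  show ?case
  proof (cases "inv (word_prod ws) a < inv (word_prod ws) (Suc a)")
    case True
    then show ?thesis unfolding word_prod_Cons length_Cons using ninv_left_up[OF vp a True] ih by linarith
  next
    case False
    then have "inv (word_prod ws) (Suc a) < inv (word_prod ws) a" using inv_neq[OF vp, of a] by simp
    then show ?thesis unfolding word_prod_Cons length_Cons using ninv_left_down[OF vp a] ih by linarith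
  qed
qed

lemma len_eq: "w permutes {1..n} \<Longrightarrow> coxeter_length n w = ninv n w"
  unfolding coxeter_length_def
proof (rule Least_equality)
  assume "w permutes {1..n}"
  then show "\<exists>ws. length ws = ninv n w \<and> set ws \<subseteq> {1..<n} \<and> word_prod ws = w"
    by (rule exists_word)
next
  fix k assume "\<exists>ws. length ws = k \<and> set ws \<subseteq> {1..<n} \<and> word_prod ws = w"
  then obtain ws where "length ws = k" "set ws \<subseteq> {1..<n}" "word_prod ws = w" by blast
  then show "ninv n w \<le> k" using word_prod_ninv by blast
qed

lemma len_right_iff:
  assumes w: "w permutes {1..n}" and a: "1 \<le> a" "a < n"
  shows "coxeter_length n w < coxeter_length n (w \<circ> sref a) \<longleftrightarrow> w a < w (Suc a)"
proof -
  have p: "w \<circ> sref a permutes {1..n}" by (rule permutes_compose[OF sref_permutes[OF a] w])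
  have ne: "w a \<noteq> w (Suc a)"
  proof
    assume "w a = w (Suc a)" then have "a = Suc a" by (rule injD[OF permutes_inj[OF w]])
    then show False by simp
  qed
  show ?thesis
  proof (cases "w a < w (Suc a)")
    case True then show ?thesis
      using ninv_right_up[OF w a True] len_eq[OF w] len_eq[OF p] by simp
  next
    case False
    then have "w (Suc a) < w a" using ne by simp
    then show ?thesis using False ninv_right_down[OF w a] len_eq[OF w] len_eq[OF p] by simp
  qed
qed

lemma min_coset_iff:
  "w \<in> min_coset_reps n r \<longleftrightarrow> w permutes {1..n} \<and> (\<forall>i\<in>{1..<n} - {r}. w i < w (Suc i))"
proof
  assume h: "w \<in> min_coset_reps n r"
  then have w: "w permutes {1..n}" by (simp add: min_coset_reps_def weyl_def)
  show "w permutes {1..n} \<and> (\<forall>i\<in>{1..<n} - {r}. w i < w (Suc i))"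
  proof (intro conjI ballI)
    fix i assume i: "i \<in> {1..<n} - {r}"
    then have "coxeter_length n w < coxeter_length n (w \<circ> sref i)"
      using h by (simp add: min_coset_reps_def)
    then show "w i < w (Suc i)" using len_right_iff[OF w] i by auto
  qed (rule w)
next
  assume h: "w permutes {1..n} \<and> (\<forall>i\<in>{1..<n} - {r}. w i < w (Suc i))"
  then have w: "w permutes {1..n}" by simp
  show "w \<in> min_coset_reps n r"
    unfolding min_coset_reps_def weyl_def
  proof (intro CollectI conjI ballI)
    fix i assume i: "i \<in> {1..<n} - {r}"
    then show "coxeter_length n w < coxeter_length n (w \<circ> sref i)"
      using h len_right_iff[OF w] by auto
  qed (rule w)
qed

lemma pairing_eq:
  assumes w: "w permutes {1..n}" and r: "r \<le> n"
  shows "pairing n (weyl_act w (omega r)) (lam n s)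
           = real (card {k\<in>{1..r}. w k \<le> s}) - real r * real s / real n"
proof -
  have "pairing n (weyl_act w (omega r)) (lam n s) = (\<Sum>i\<in>{1..n}. omega r (inv w i) * lam n s i)"
    by (simp add: pairing_def weyl_act_def)
  also have "\<dots> = (\<Sum>k\<in>{1..n}. omega r (inv w (w k)) * lam n s (w k))"
    by (rule sum.reindex_bij_betw[symmetric, OF permutes_imp_bij[OF w]])
  also have "\<dots> = (\<Sum>k\<in>{1..n}. omega r k * lam n s (w k))"
    by (simp add: permutes_inverses(2)[OF w])
  also have "\<dots> = (\<Sum>k\<in>{1..n}. if k \<in> {1..r} then lam n s (w k) else 0)"
    by (rule sum.cong) (auto simp: omega_def)
  also have "\<dots> = (\<Sum>k\<in>{1..r}. lam n s (w k))"
  proof -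
    have "{1..n} \<inter> {k. k \<le> r} = {1..r}" using r by auto
    then show ?thesis by (simp add: sum.If_cases)
  qed
  also have "\<dots> = (\<Sum>k\<in>{1..r}. (if w k \<le> s then 1 else 0) - real s / real n)"
    by (simp add: lam_def)
  also have "\<dots> = real (card {k\<in>{1..r}. w k \<le> s}) - real r * real s / real n"
  proof -
    have "{1..r} \<inter> {k. w k \<le> s} = {k\<in>{1..r}. w k \<le> s}" by auto
    then show ?thesis by (simp add: sum_subtractf sum.If_cases)
  qed
  finally show ?thesis .
qed


lemma cyc:
  "word_prod (rev [j..<j+d]) x = (if x = j then j + d else if j < x \<and> x \<le> j + d then x - 1 else x)"
proof (induct d)
  case 0 then show ?case by (simp add: word_prod_Nil)
next
  case (Suc d)
  have "rev [j..<j + Suc d] = (j + d) # rev [j..<j+d]" by simp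
  then have "word_prod (rev [j..<j + Suc d]) x = sref (j + d) (word_prod (rev [j..<j+d]) x)"
    by (simp add: word_prod_Cons)
  also have "\<dots> = sref (j + d) (if x = j then j + d else if j < x \<and> x \<le> j + d then x - 1 else x)"
    using Suc by simp
  finally show ?case by (auto simp: sref_apply)
qed

lemma word_G:
  "a \<le> Suc r \<Longrightarrow> word_prod (concat (map (\<lambda>j. rev [j..<j+d]) [a..<Suc r])) k =
     (if k < a then k else if k \<le> r then k + d else if k \<le> r + d then k - (Suc r - a) else k)"
proof (induct "Suc r - a" arbitrary: a)
  case 0
  then have "a = Suc r" by simp
  then show ?case by (simp add: word_prod_Nil)
next
  case (Suc m)
  then have a: "a < Suc r" by simp
  have l: "[a..<Suc r] = a # [Suc a..<Suc r]" using a by (rule upt_conv_Cons)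
  have ih: "word_prod (concat (map (\<lambda>j. rev [j..<j+d]) [Suc a..<Suc r])) k =
     (if k < Suc a then k else if k \<le> r then k + d else if k \<le> r + d then k - (Suc r - Suc a) else k)"
    using Suc a by simp
  have "word_prod (concat (map (\<lambda>j. rev [j..<j+d]) [a..<Suc r])) k
      = word_prod (rev [a..<a+d]) (word_prod (concat (map (\<lambda>j. rev [j..<j+d]) [Suc a..<Suc r])) k)"
    unfolding l by (simp add: word_prod_append)
  also have "\<dots> = (if k < a then k else if k \<le> r then k + d else if k \<le> r + d then k - (Suc r - a) else k)"
    unfolding ih cyc using a by auto
  finally show ?case .
qed

lemma word_f:
  assumes "p \<le> s" "p \<le> r"
  shows "word_prod (concat (map (\<lambda>j. rev [j..<s + j - p]) [p+1..<r+1])) k =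
    (if k \<le> p then k else if k \<le> r then k + (s - p) else if k \<le> r + (s - p) then k - (r - p) else k)"
proof -
  have l: "[p+1..<r+1] = [Suc p..<Suc r]" by simp
  have e: "map (\<lambda>j. rev [j..<s + j - p]) [p+1..<r+1] = map (\<lambda>j. rev [j..<j + (s - p)]) [Suc p..<Suc r]"
    unfolding l
  proof (rule map_cong)
    fix j show "rev [j..<s + j - p] = rev [j..<j + (s - p)]" using assms
      by (metis add.commute add_diff_assoc)
  qed simp
  have g: "word_prod (concat (map (\<lambda>j. rev [j..<j + (s - p)]) [Suc p..<Suc r])) k =
     (if k < Suc p then k else if k \<le> r then k + (s - p) else if k \<le> r + (s - p) then k - (Suc r - Suc p) else k)"
    by (rule word_G) (use assms in simp)
  show ?thesis unfolding e using g by (simp only: less_Suc_eq_le diff_Suc_Suc)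
qed


definition fw :: "nat \<Rightarrow> nat \<Rightarrow> nat \<Rightarrow> nat \<Rightarrow> nat" where
  "fw p r d k = (if k \<le> p then k else if k \<le> r then k + d else if k \<le> r + d then k - (r - p) else k)"

definition grass :: "nat \<Rightarrow> nat \<Rightarrow> (nat \<Rightarrow> nat) \<Rightarrow> bool" where
  "grass n r w \<longleftrightarrow> w permutes {1..n} \<and> (\<forall>i\<in>{1..<n} - {r}. w i < w (Suc i))"

definition cnt :: "nat \<Rightarrow> nat \<Rightarrow> (nat \<Rightarrow> nat) \<Rightarrow> nat" where
  "cnt r s w = card {k\<in>{1..r}. w k \<le> s}"

lemma arith1:
  fixes r s n :: nat
  assumes "r \<le> n" "s \<le> n"
  shows "(r + s - n) * n \<le> r * s"
proof (cases "r + s \<le> n")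
  case True then show ?thesis by simp
next
  case False
  define t where "t = r + s - n"
  define x where "x = n - r"
  have n: "n = r + x" using assms x_def by simp
  have s: "s = x + t" using False assms t_def x_def by simp
  have tr: "t \<le> r" using assms t_def by simp
  have "t * n = t * r + t * x" using n by (simp add: algebra_simps)
  also have "\<dots> \<le> r * t + r * x" using tr by (simp add: mult.commute mult_le_mono1)
  also have "\<dots> = r * s" using s by (simp add: algebra_simps)
  finally show ?thesis using t_def by simp
qed

lemma bruhat_mono:
  assumes "bruhat_le n u v" "u \<in> weyl n"
  shows "v \<in> weyl n \<and> (u = v \<or> ninv n u < ninv n v)"
  using assms(1) unfolding bruhat_le_def
proof (induct rule: rtranclp_induct)
  case base then show ?case using assms(2) by simp
next
  case (step y z)
  obtain i j where ij: "1 \<le> i" "i < j" "j \<le> n" "z = y \<circ> Transposition.transpose i j"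
    and lt: "coxeter_length n y < coxeter_length n z"
    using step(2) unfolding bruhat_step_def by blast
  have y: "y permutes {1..n}" using step(3) by (simp add: weyl_def)
  have z: "z permutes {1..n}" unfolding ij(4)
    by (rule permutes_compose[OF permutes_swap_id y]) (use ij in auto)
  have "ninv n y < ninv n z" using lt len_eq[OF y] len_eq[OF z] by simp
  then show ?case using step(3) z by (auto simp: weyl_def)
qed

context
  fixes n s r p :: nat
  assumes s1: "1 \<le> s" and sn: "s < n" and r1: "1 \<le> r" and rn: "r < n"
    and pr: "p < r" and ps: "p < s" and rsp: "r + s \<le> n + p"
begin

lemma f_word: "word_prod (concat (map (\<lambda>j. rev [j..<s + j - p]) [p+1..<r+1])) = fw p r (s - p)"
proof (rule ext)
  fix k show "word_prod (concat (map (\<lambda>j. rev [j..<s + j - p]) [p+1..<r+1])) k = fw p r (s - p) k"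
    unfolding fw_def by (rule word_f) (use pr ps in auto)
qed

lemma f_perm: "fw p r (s - p) permutes {1..n}"
proof -
  have "set (concat (map (\<lambda>j. rev [j..<s + j - p]) [p+1..<r+1])) \<subseteq> {1..<n}"
    using rsp by auto
  then show ?thesis using word_prod_permutes f_word by metis
qed

lemma f_incr: "\<forall>i\<in>{1..<n} - {r}. fw p r (s - p) i < fw p r (s - p) (Suc i)"
  using pr ps unfolding fw_def by auto

lemma f_lt: "1 \<le> i \<Longrightarrow> i < j \<Longrightarrow> j \<le> r \<Longrightarrow> fw p r (s - p) i < fw p r (s - p) j"
  using pr ps unfolding fw_def by auto

lemma f_grass: "grass n r (fw p r (s - p))"
  unfolding grass_def using f_perm f_incr by simp

lemma f_cnt: "cnt r s (fw p r (s - p)) = p"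
proof -
  have "{k\<in>{1..r}. fw p r (s - p) k \<le> s} = {1..p}"
    using pr ps unfolding fw_def by auto
  then show ?thesis by (simp add: cnt_def)
qed

lemma grass_lt:
  assumes g: "grass n r w" and ij: "1 \<le> i" "i < j" "j \<le> r"
  shows "w i < w j"
proof -
  have inc: "\<forall>i. 1 \<le> i \<longrightarrow> Suc i < Suc r \<longrightarrow> w i < w (Suc i)"
    using g rn unfolding grass_def by auto
  show ?thesis by (rule incr_lt[OF inc]) (use ij in auto)
qed

lemma grass_lt2:
  assumes g: "grass n r w" and ij: "r < i" "i < j" "j \<le> n"
  shows "w i < w j"
proof -
  have inc: "\<forall>i. Suc r \<le> i \<longrightarrow> Suc i < Suc n \<longrightarrow> w i < w (Suc i)"
    using g r1 unfolding grass_def by auto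
  show ?thesis by (rule incr_lt[OF inc]) (use ij in auto)
qed

lemma grass_unique:
  assumes gw: "grass n r w" and gf: "grass n r f" and eq: "\<forall>k\<in>{1..r}. w k = f k"
  shows "w = f"
proof -
  have w: "w permutes {1..n}" and f: "f permutes {1..n}" using gw gf by (auto simp: grass_def)
  have e: "{Suc r..<Suc n} = {1..n} - {1..r}" using r1 by auto
  have iw: "w ` {Suc r..<Suc n} = {1..n} - w ` {1..r}"
    unfolding e image_set_diff[OF permutes_inj[OF w]] permutes_image[OF w] ..
  have if': "f ` {Suc r..<Suc n} = {1..n} - f ` {1..r}"
    unfolding e image_set_diff[OF permutes_inj[OF f]] permutes_image[OF f] ..
  have "w ` {1..r} = f ` {1..r}" by (rule image_cong) (use eq in auto)
  then have im: "w ` {Suc r..<Suc n} = f ` {Suc r..<Suc n}" using iw if' by simp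
  have incw: "\<forall>i. Suc r \<le> i \<longrightarrow> Suc i < Suc n \<longrightarrow> w i < w (Suc i)"
    using gw r1 unfolding grass_def by auto
  have incf: "\<forall>i. Suc r \<le> i \<longrightarrow> Suc i < Suc n \<longrightarrow> f i < f (Suc i)"
    using gf r1 unfolding grass_def by auto
  show ?thesis
  proof (rule ext)
    fix k
    consider "k \<in> {1..r}" | "k \<in> {Suc r..<Suc n}" | "k \<notin> {1..n}" by force
    then show "w k = f k"
    proof cases
      case 1 then show ?thesis using eq by blast
    next
      case 2 then show ?thesis by (rule mono_unique[OF incw incf im])
    next
      case 3 then show ?thesis using permutes_not_in[OF w] permutes_not_in[OF f] by metis
    qed
  qed
qed

lemma grass_ge:
  assumes g: "grass n r w" and c: "cnt r s w \<le> p" and k: "k \<in> {1..r}"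
  shows "fw p r (s - p) k \<le> w k"
proof -
  have w: "w permutes {1..n}" using g by (simp add: grass_def)
  have step: "w i + (j - i) \<le> w j" if "1 \<le> i" "i \<le> j" "j \<le> r" for i j
    using that
  proof (induct j)
    case 0 then show ?case by simp
  next
    case (Suc j)
    show ?case
    proof (cases "i = Suc j")
      case True then show ?thesis by simp
    next
      case False
      then have "i \<le> j" using Suc by simp
      then have "w i + (j - i) \<le> w j" using Suc by simp
      moreover have "w j < w (Suc j)" using grass_lt[OF g] Suc \<open>i \<le> j\<close> by simp
      ultimately show ?thesis using \<open>i \<le> j\<close> by simp
    qed
  qed
  have w1: "1 \<le> w 1"
  proof -
    have "(1::nat) \<in> {1..n}" using rn by simp
    then have "w 1 \<in> {1..n}" using permutes_in_image[OF w] by blast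
    then show ?thesis by simp
  qed
  show ?thesis
  proof (cases "k \<le> p")
    case True
    then show ?thesis using step[of 1 k] w1 k unfolding fw_def by simp
  next
    case False
    have big: "s < w (Suc p)"
    proof (rule ccontr)
      assume "\<not> s < w (Suc p)"
      then have "w (Suc p) \<le> s" by simp
      have "{1..Suc p} \<subseteq> {k\<in>{1..r}. w k \<le> s}"
      proof
        fix i assume i: "i \<in> {1..Suc p}"
        have "w i \<le> w (Suc p)"
        proof (cases "i = Suc p")
          case False then show ?thesis using grass_lt[OF g, of i "Suc p"] i pr by simp
        qed simp
        then show "i \<in> {k\<in>{1..r}. w k \<le> s}" using i pr \<open>w (Suc p) \<le> s\<close> by simp
      qed
      then have "card {1..Suc p} \<le> cnt r s w" unfolding cnt_def by (intro card_mono) auto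
      then show False using c by simp
    qed
    have "w (Suc p) + (k - Suc p) \<le> w k" using step[of "Suc p" k] False k by simp
    then show ?thesis using False k big ps unfolding fw_def by simp
  qed
qed

lemma chain:
  "grass n r w \<Longrightarrow> cnt r s w \<le> p \<Longrightarrow> bruhat_le n (fw p r (s - p)) w"
proof (induction "ninv n w" arbitrary: w rule: less_induct)
  case less
  let ?f = "fw p r (s - p)"
  have g: "grass n r w" and c: "cnt r s w \<le> p" by fact+
  have w: "w permutes {1..n}" using g by (simp add: grass_def)
  have inj: "inj w" by (rule permutes_inj[OF w])
  show ?case
  proof (cases "w = ?f")
    case True then show ?thesis unfolding bruhat_le_def by simp
  next
    case False
    have "\<exists>k. 1 \<le> k \<and> k \<le> r \<and> w k \<noteq> ?f k"
    proof (rule ccontr)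
      assume "\<not> (\<exists>k. 1 \<le> k \<and> k \<le> r \<and> w k \<noteq> ?f k)"
      then have "\<forall>k\<in>{1..r}. w k = ?f k" by auto
      then have "w = ?f" by (rule grass_unique[OF g f_grass])
      then show False using False by simp
    qed
    then have ex: "\<exists>k. 1 \<le> k \<and> k \<le> r \<and> w k \<noteq> ?f k" .
    define k where "k = (LEAST k. 1 \<le> k \<and> k \<le> r \<and> w k \<noteq> ?f k)"
    have k: "1 \<le> k" "k \<le> r" "w k \<noteq> ?f k"
      using LeastI_ex[OF ex] unfolding k_def[symmetric] by auto
    have before: "w i = ?f i" if "1 \<le> i" "i < k" for i
    proof (rule ccontr)
      assume "w i \<noteq> ?f i"
      then have "k \<le> i" unfolding k_def using that k by (intro Least_le) simp
      then show False using that by simp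
    qed
    have fk: "?f k < w k" using grass_ge[OF g c] k by (simp add: le_neq_implies_less)
    have fk1: "1 \<le> ?f k" using k pr unfolding fw_def by auto
    define a where "a = w k - 1"
    have wk: "w k = Suc a" using fk a_def by simp
    have a1: "1 \<le> a" using fk fk1 a_def by simp
    have wkn: "w k \<in> {1..n}"
    proof -
      have "k \<in> {1..n}" using k rn by simp
      then show ?thesis using permutes_in_image[OF w] by blast
    qed
    have an: "a < n" using wkn wk by simp
    have fka: "?f k \<le> a" using fk wk by simp
    have notimg: "w i \<noteq> a" if "i \<in> {1..r}" for i
    proof (cases "i < k")
      case True
      then have "w i = ?f i" using before that by simp
      also have "\<dots> < ?f k" using f_lt[of i k] True that k by simp
      finally show ?thesis using fka by simp
    next
      case False
      show ?thesis
      proof (cases "i = k")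
        case True then show ?thesis using wk by simp
      next
        case False
        then have "w k < w i" using grass_lt[OF g, of k i] \<open>\<not> i < k\<close> that k by simp
        then show ?thesis using wk by simp
      qed
    qed
    define q where "q = inv w a"
    have wq: "w q = a" unfolding q_def by (rule permutes_inverses(1)[OF w])
    have qn: "q \<in> {1..n}"
    proof -
      have "a \<in> {1..n}" using a1 an by simp
      then show ?thesis unfolding q_def using permutes_in_image[OF permutes_inv[OF w]] by blast
    qed
    have qr: "r < q"
    proof (rule ccontr)
      assume "\<not> r < q"
      then have "q \<in> {1..r}" using qn by simp
      then show False using notimg wq by blast
    qed
    have invk: "inv w (Suc a) = k" using wk permutes_inv_eq[OF w] by simp
    have ainv: "inv w a = q" using q_def by simp
    have aa: "1 \<le> a" "a < n" by (rule a1, rule an)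
    define v where "v = sref a \<circ> w"
    have vp: "v permutes {1..n}" unfolding v_def by (rule permutes_compose[OF w sref_permutes[OF aa]])
    have kq: "k < q" using k qr by simp
    have nin: "ninv n w = Suc (ninv n v)" unfolding v_def
      by (rule ninv_left_down[OF w aa]) (simp add: invk ainv kq)
    have gv: "grass n r v" unfolding grass_def
    proof (intro conjI ballI)
      show "v permutes {1..n}" by (rule vp)
    next
      fix i assume i: "i \<in> {1..<n} - {r}"
      have lt: "w i < w (Suc i)" using g i unfolding grass_def by blast
      have "\<not> (w i = a \<and> w (Suc i) = Suc a)"
      proof
        assume h: "w i = a \<and> w (Suc i) = Suc a"
        then have "w (Suc i) = w k" using wk by simp
        then have "Suc i = k" by (rule injD[OF inj])
        then have "i \<in> {1..r}" using i k by auto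
        then show False using notimg h by blast
      qed
      from sref_mono[OF lt this] show "v i < v (Suc i)" unfolding v_def by simp
    qed
    have same: "v i = w i" if "i \<in> {1..r}" "i \<noteq> k" for i
    proof -
      have "w i \<noteq> a" using notimg that by blast
      moreover have "w i \<noteq> Suc a"
      proof
        assume "w i = Suc a"
        then have "w i = w k" using wk by simp
        then have "i = k" by (rule injD[OF inj])
        then show False using that by simp
      qed
      ultimately show ?thesis unfolding v_def by (simp add: sref_apply)
    qed
    have vk: "v k = a" unfolding v_def using wk by (simp add: sref_apply)
    have cv: "cnt r s v \<le> p"
    proof (cases "a = s")
      case False
      have "{i\<in>{1..r}. v i \<le> s} = {i\<in>{1..r}. w i \<le> s}"
      proof (intro Collect_cong conj_cong refl)
        fix i assume "i \<in> {1..r}"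
        then show "(v i \<le> s) = (w i \<le> s)"
          using same vk wk False by (cases "i = k") auto
      qed
      then show ?thesis using c unfolding cnt_def by simp
    next
      case True
      have kp: "k \<le> p"
      proof (rule ccontr)
        assume "\<not> k \<le> p"
        then have "?f k = k + (s - p)" using k unfolding fw_def by simp
        then have "s < ?f k" using \<open>\<not> k \<le> p\<close> ps by simp
        then show False using fka True by simp
      qed
      have sub1: "{i\<in>{1..r}. w i \<le> s} \<subseteq> {1..<k}"
      proof
        fix i assume i: "i \<in> {i\<in>{1..r}. w i \<le> s}"
        show "i \<in> {1..<k}"
        proof (rule ccontr)
          assume "i \<notin> {1..<k}"
          then have "k \<le> i" using i by simp
          then have "w k \<le> w i"
            using grass_lt[OF g, of k i] i k by (cases "k = i") auto
          then show False using i wk True by simp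
        qed
      qed
      have cw: "card {i\<in>{1..r}. w i \<le> s} \<le> k - 1"
        using card_mono[OF _ sub1] by simp
      have sub2: "{i\<in>{1..r}. v i \<le> s} \<subseteq> insert k {i\<in>{1..r}. w i \<le> s}"
        using same by auto
      have "card {i\<in>{1..r}. v i \<le> s} \<le> card (insert k {i\<in>{1..r}. w i \<le> s})"
        by (rule card_mono[OF _ sub2]) simp
      also have "\<dots> \<le> Suc (card {i\<in>{1..r}. w i \<le> s})"
        by (simp add: card_insert_if)
      finally show ?thesis using cw kp k unfolding cnt_def by simp
    qed
    have ih: "bruhat_le n ?f v" using less.hyps[of v] nin gv cv by simp
    have wt: "w = v \<circ> Transposition.transpose k q"
    proof (rule ext)
      fix x
      show "w x = (v \<circ> Transposition.transpose k q) x"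
      proof (cases "x = k")
        case True then show ?thesis unfolding v_def using wq wk by (simp add: sref_apply)
      next
        case False
        show ?thesis
        proof (cases "x = q")
          case True then show ?thesis unfolding v_def using wq wk kq by (simp add: sref_apply)
        next
          case False
          have "w x \<noteq> a"
          proof
            assume "w x = a" then have "w x = w q" using wq by simp
            then have "x = q" by (rule injD[OF inj])
            then show False using False by simp
          qed
          moreover have "w x \<noteq> Suc a"
          proof
            assume "w x = Suc a" then have "w x = w k" using wk by simp
            then have "x = k" by (rule injD[OF inj])
            then show False using \<open>x \<noteq> k\<close> by simp
          qed
          ultimately show ?thesis unfolding v_def using \<open>x \<noteq> k\<close> False
            by (simp add: sref_apply)
        qed
      qed
    qed
    have st: "bruhat_step n v w"
      unfolding bruhat_step_def
    proof (intro conjI exI)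
      show "v \<in> weyl n" using vp by (simp add: weyl_def)
      show "1 \<le> k" "k < q" "q \<le> n" using k kq qn by auto
      show "w = v \<circ> Transposition.transpose k q" by (rule wt)
      show "coxeter_length n v < coxeter_length n w"
        using len_eq[OF vp] len_eq[OF w] nin by simp
    qed
    show ?thesis unfolding bruhat_le_def
      using ih st unfolding bruhat_le_def by (meson rtranclp.rtrancl_into_rtrancl)
  qed
qed

end


lemma cond_iff:
  assumes n: "0 < n" and r: "r \<le> n"
  shows "w \<in> cond_set n s r \<longleftrightarrow> grass n r w \<and> cnt r s w \<le> r * s div n"
proof -
  have key: "pairing n (weyl_act w (omega r)) (lam n s) \<le> 0 \<longleftrightarrow> cnt r s w \<le> r * s div n"
    if w: "w permutes {1..n}"
  proof -
    have "pairing n (weyl_act w (omega r)) (lam n s) \<le> 0 \<longleftrightarrow>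
          real (cnt r s w) - real r * real s / real n \<le> 0"
      using pairing_eq[OF w r, of s] by (simp add: cnt_def)
    also have "\<dots> \<longleftrightarrow> real (cnt r s w) * real n \<le> real r * real s"
      using n by (simp add: field_simps)
    also have "\<dots> \<longleftrightarrow> cnt r s w * n \<le> r * s"
      by (metis of_nat_le_iff of_nat_mult)
    also have "\<dots> \<longleftrightarrow> cnt r s w \<le> r * s div n"
      using n by (simp add: less_eq_div_iff_mult_less_eq)
    finally show ?thesis .
  qed
  show ?thesis
    unfolding cond_set_def min_coset_iff grass_def using key by auto
qed

theorem lemma5p8:
  fixes n s r :: nat
  assumes "1 \<le> s" "s \<le> n - 1" "1 \<le> r" "r \<le> n - 1"
  shows "w_sr n s r =
    word_prod (concat (map (\<lambda>j. rev [j ..< s + j - (r * s div n)])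
                           [r * s div n + 1 ..< r + 1]))"
proof -
  define p where "p = r * s div n"
  have n0: "0 < n" and sn: "s < n" and rn: "r < n" and s1: "1 \<le> s" and r1: "1 \<le> r"
    using assms by auto
  have pr: "p < r" unfolding p_def div_less_iff_less_mult[OF n0] using sn r1 by simp
  have ps: "p < s" unfolding p_def div_less_iff_less_mult[OF n0] using rn s1
    by (simp add: mult.commute)
  have "r + s - n \<le> p" unfolding p_def less_eq_div_iff_mult_less_eq[OF n0]
    by (rule arith1) (use sn rn in auto)
  then have rsp: "r + s \<le> n + p" by simp
  note ctx = s1 sn r1 rn pr ps rsp
  let ?f = "fw p r (s - p)"
  have W: "word_prod (concat (map (\<lambda>j. rev [j ..< s + j - (r * s div n)])
                           [r * s div n + 1 ..< r + 1])) = ?f"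
    unfolding p_def[symmetric] by (rule f_word[OF ctx])
  have ci: "w \<in> cond_set n s r \<longleftrightarrow> grass n r w \<and> cnt r s w \<le> p" for w
    unfolding p_def using cond_iff[OF n0] rn by simp
  have fc: "?f \<in> cond_set n s r" using ci f_grass[OF ctx] f_cnt[OF ctx] by simp
  have low: "bruhat_le n ?f w" if "w \<in> cond_set n s r" for w
    using that ci chain[OF ctx] by blast
  have fweyl: "?f \<in> weyl n" using f_grass[OF ctx] by (simp add: grass_def weyl_def)
  show ?thesis
    unfolding W w_sr_def
  proof (rule the_equality)
    show "?f \<in> cond_set n s r \<and> (\<forall>v\<in>cond_set n s r. bruhat_le n v ?f \<longrightarrow> v = ?f)"
    proof (intro conjI ballI impI)
      show "?f \<in> cond_set n s r" by (rule fc)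
    next
      fix v assume v: "v \<in> cond_set n s r" and le: "bruhat_le n v ?f"
      have vw: "v \<in> weyl n" using v ci by (simp add: grass_def weyl_def)
      have a: "?f = v \<or> ninv n ?f < ninv n v" using bruhat_mono[OF low[OF v] fweyl] by simp
      have b: "v = ?f \<or> ninv n v < ninv n ?f" using bruhat_mono[OF le vw] by simp
      show "v = ?f" using a b by auto
    qed
  next
    fix x assume x: "x \<in> cond_set n s r \<and> (\<forall>v\<in>cond_set n s r. bruhat_le n v x \<longrightarrow> v = x)"
    then have "bruhat_le n ?f x" using low by blast
    then show "x = ?f" using x fc by blast
  qed
qed

end
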